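(* There exists an explicit family of triangle-free graphs on $n$ vertices (with $n$ arbitrarily large) where $\overline{\chi}_f\ge n/2$ whereas the broadcast rate satisfies $\beta\le\frac38 n$.
   Context: For an undirected graph $G$ on vertex set $[n]$, consider the index coding problem: a server holds messages $x_1,\dots,x_n\in\Sigma$ ($|\Sigma|>1$), receiver $i$ wants $x_i$ and knows $x_j$ for every neighbor $j$ of $i$. A solution is an encoding $\mathcal{E}:\Sigma^n\to\Sigma_P$ from which each receiver can recover its message given its side information, for all message values. $\beta_t(G)$ is the minimum of $\lceil\log_2|\Sigma_P|\rceil$ over solutions with $|\Sigma|=2^t$, and the broadcast rate is $\beta(G)=\lim_t\beta_t(G)/t=\inf_t\beta_t(G)/t$. $\overline{\chi}_f(G)$ is the fractional clique-cover number: the minimum total weight of a nonnegative weighting of cliques of $G$ covering each vertex with total weight at least $1$. *)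

theory Defs
  imports Complex_Main "HOL-Library.FuncSet"
begin

definition undirected_graph :: "nat \<Rightarrow> (nat \<Rightarrow> nat \<Rightarrow> bool) \<Rightarrow> bool" where
  "undirected_graph n E \<longleftrightarrow>
     (\<forall>i<n. \<forall>j<n. E i j \<longrightarrow> E j i) \<and> (\<forall>i<n. \<not> E i i)"

definition triangle_free :: "nat \<Rightarrow> (nat \<Rightarrow> nat \<Rightarrow> bool) \<Rightarrow> bool" where
  "triangle_free n E \<longleftrightarrow>
     \<not> (\<exists>i<n. \<exists>j<n. \<exists>k<n. E i j \<and> E j k \<and> E i k)"

definition nbrs :: "nat \<Rightarrow> (nat \<Rightarrow> nat \<Rightarrow> bool) \<Rightarrow> nat \<Rightarrow> nat set" where
  "nbrs n E i = {j. j < n \<and> E i j}"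

definition messages :: "nat \<Rightarrow> nat \<Rightarrow> (nat \<Rightarrow> nat) set" where
  "messages n t = {0..<n} \<rightarrow>\<^sub>E {0..<2^t}"

text \<open>The broadcast alphabet Sigma_P is taken to be the image of the encoder
  (inside nat).\<close>
definition ic_solution :: "nat \<Rightarrow> (nat \<Rightarrow> nat \<Rightarrow> bool) \<Rightarrow> nat \<Rightarrow> ((nat \<Rightarrow> nat) \<Rightarrow> nat) \<Rightarrow> bool" where
  "ic_solution n E t enc \<longleftrightarrow>
     (\<forall>i<n. \<exists>dec :: nat \<Rightarrow> (nat \<Rightarrow> nat) \<Rightarrow> nat.
        \<forall>x\<in>messages n t. dec (enc x) (restrict x (nbrs n E i)) = x i)"

definition beta_t :: "nat \<Rightarrow> (nat \<Rightarrow> nat \<Rightarrow> bool) \<Rightarrow> nat \<Rightarrow> nat" where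
  "beta_t n E t = (INF enc \<in> {enc. ic_solution n E t enc}.
       nat \<lceil>log 2 (real (card (enc ` messages n t)))\<rceil>)"

definition broadcast_rate :: "nat \<Rightarrow> (nat \<Rightarrow> nat \<Rightarrow> bool) \<Rightarrow> real" where
  "broadcast_rate n E = (INF t \<in> {1..}. real (beta_t n E t) / real t)"

definition is_clique :: "nat \<Rightarrow> (nat \<Rightarrow> nat \<Rightarrow> bool) \<Rightarrow> nat set \<Rightarrow> bool" where
  "is_clique n E C \<longleftrightarrow> C \<subseteq> {0..<n} \<and> (\<forall>u\<in>C. \<forall>v\<in>C. u \<noteq> v \<longrightarrow> E u v)"

definition cliques :: "nat \<Rightarrow> (nat \<Rightarrow> nat \<Rightarrow> bool) \<Rightarrow> nat set set" where
  "cliques n E = {C. is_clique n E C}"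

definition frac_clique_cover :: "nat \<Rightarrow> (nat \<Rightarrow> nat \<Rightarrow> bool) \<Rightarrow> (nat set \<Rightarrow> real) \<Rightarrow> bool" where
  "frac_clique_cover n E w \<longleftrightarrow>
     (\<forall>C\<in>cliques n E. w C \<ge> 0) \<and>
     (\<forall>v<n. (\<Sum>C\<in>{C\<in>cliques n E. v \<in> C}. w C) \<ge> 1)"

definition frac_clique_cover_number :: "nat \<Rightarrow> (nat \<Rightarrow> nat \<Rightarrow> bool) \<Rightarrow> real" where
  "frac_clique_cover_number n E =
     (INF w \<in> {w. frac_clique_cover n E w}. \<Sum>C\<in>cliques n E. w C)"

end

theory Submission imports Defs begin
definition NL :: "nat list list" where "NL = [[1, 2, 4, 8, 15], [0, 3, 5, 9, 14], [0, 3, 6, 10, 13], [1, 2, 7, 11, 12], [0, 5, 6, 11, 12], [1, 4, 7, 10, 13], [2, 4, 7, 9, 14], [3, 5, 6, 8, 15], [0, 7, 9, 10, 12], [1, 6, 8, 11, 13], [2, 5, 8, 11, 14], [3, 4, 9, 10, 15], [3, 4, 8, 13, 14], [2, 5, 9, 12, 15], [1, 6, 10, 12, 15], [0, 7, 11, 13, 14]]"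

definition BL :: "nat list list" where "BL = [[0, 1, 2, 4, 8, 15], [1, 0, 3, 5, 9, 14], [2, 0, 3, 6, 10, 13], [3, 1, 2, 7, 11, 12], [4, 0, 5, 6, 11, 12], [8, 0, 7, 9, 10, 12]]"

definition DL :: "nat list list" where "DL = [[0], [1], [2], [3], [4], [2, 3, 4], [1, 3, 4], [0, 3, 4], [5], [2, 3, 5], [1, 3, 5], [0, 3, 5], [1, 2, 3, 4, 5], [0, 2, 3, 4, 5], [0, 1, 3, 4, 5], [0, 1, 2, 4, 5]]"

definition QL :: "nat list list" where "QL = [[], [], [], [], [], [0, 2, 3, 6, 11, 12], [0, 1, 3, 5, 11, 12], [0, 1, 2, 4, 11, 12], [], [0, 2, 3, 7, 10, 12], [0, 1, 3, 7, 9, 12], [0, 1, 2, 7, 8, 12], [0, 0, 1, 2, 3, 5, 6, 7, 9, 10, 11, 12], [0, 0, 1, 2, 3, 4, 6, 7, 8, 10, 11, 12], [0, 0, 1, 2, 3, 4, 5, 7, 8, 9, 11, 12], [0, 0, 1, 2, 3, 4, 5, 6, 8, 9, 10, 12]]"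

lemma ident_0: "(y::nat\<Rightarrow>nat) 0 + sum_list (map y (NL ! 0)) + 2 * sum_list (map y (QL ! 0)) = sum_list (map (\<lambda>j. sum_list (map y (BL ! j))) (DL ! 0))"
  by (simp add: NL_def QL_def BL_def DL_def algebra_simps)

lemma ident_1: "(y::nat\<Rightarrow>nat) 1 + sum_list (map y (NL ! 1)) + 2 * sum_list (map y (QL ! 1)) = sum_list (map (\<lambda>j. sum_list (map y (BL ! j))) (DL ! 1))"
  by (simp add: NL_def QL_def BL_def DL_def algebra_simps)

lemma ident_2: "(y::nat\<Rightarrow>nat) 2 + sum_list (map y (NL ! 2)) + 2 * sum_list (map y (QL ! 2)) = sum_list (map (\<lambda>j. sum_list (map y (BL ! j))) (DL ! 2))"
  by (simp add: NL_def QL_def BL_def DL_def algebra_simps)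

lemma ident_3: "(y::nat\<Rightarrow>nat) 3 + sum_list (map y (NL ! 3)) + 2 * sum_list (map y (QL ! 3)) = sum_list (map (\<lambda>j. sum_list (map y (BL ! j))) (DL ! 3))"
  by (simp add: NL_def QL_def BL_def DL_def algebra_simps)

lemma ident_4: "(y::nat\<Rightarrow>nat) 4 + sum_list (map y (NL ! 4)) + 2 * sum_list (map y (QL ! 4)) = sum_list (map (\<lambda>j. sum_list (map y (BL ! j))) (DL ! 4))"
  by (simp add: NL_def QL_def BL_def DL_def algebra_simps)

lemma ident_5: "(y::nat\<Rightarrow>nat) 5 + sum_list (map y (NL ! 5)) + 2 * sum_list (map y (QL ! 5)) = sum_list (map (\<lambda>j. sum_list (map y (BL ! j))) (DL ! 5))"
  by (simp add: NL_def QL_def BL_def DL_def algebra_simps)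

lemma ident_6: "(y::nat\<Rightarrow>nat) 6 + sum_list (map y (NL ! 6)) + 2 * sum_list (map y (QL ! 6)) = sum_list (map (\<lambda>j. sum_list (map y (BL ! j))) (DL ! 6))"
  by (simp add: NL_def QL_def BL_def DL_def algebra_simps)

lemma ident_7: "(y::nat\<Rightarrow>nat) 7 + sum_list (map y (NL ! 7)) + 2 * sum_list (map y (QL ! 7)) = sum_list (map (\<lambda>j. sum_list (map y (BL ! j))) (DL ! 7))"
  by (simp add: NL_def QL_def BL_def DL_def algebra_simps)

lemma ident_8: "(y::nat\<Rightarrow>nat) 8 + sum_list (map y (NL ! 8)) + 2 * sum_list (map y (QL ! 8)) = sum_list (map (\<lambda>j. sum_list (map y (BL ! j))) (DL ! 8))"
  by (simp add: NL_def QL_def BL_def DL_def algebra_simps)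

lemma ident_9: "(y::nat\<Rightarrow>nat) 9 + sum_list (map y (NL ! 9)) + 2 * sum_list (map y (QL ! 9)) = sum_list (map (\<lambda>j. sum_list (map y (BL ! j))) (DL ! 9))"
  by (simp add: NL_def QL_def BL_def DL_def algebra_simps)

lemma ident_10: "(y::nat\<Rightarrow>nat) 10 + sum_list (map y (NL ! 10)) + 2 * sum_list (map y (QL ! 10)) = sum_list (map (\<lambda>j. sum_list (map y (BL ! j))) (DL ! 10))"
  by (simp add: NL_def QL_def BL_def DL_def algebra_simps)

lemma ident_11: "(y::nat\<Rightarrow>nat) 11 + sum_list (map y (NL ! 11)) + 2 * sum_list (map y (QL ! 11)) = sum_list (map (\<lambda>j. sum_list (map y (BL ! j))) (DL ! 11))"
  by (simp add: NL_def QL_def BL_def DL_def algebra_simps)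

lemma ident_12: "(y::nat\<Rightarrow>nat) 12 + sum_list (map y (NL ! 12)) + 2 * sum_list (map y (QL ! 12)) = sum_list (map (\<lambda>j. sum_list (map y (BL ! j))) (DL ! 12))"
  by (simp add: NL_def QL_def BL_def DL_def algebra_simps)

lemma ident_13: "(y::nat\<Rightarrow>nat) 13 + sum_list (map y (NL ! 13)) + 2 * sum_list (map y (QL ! 13)) = sum_list (map (\<lambda>j. sum_list (map y (BL ! j))) (DL ! 13))"
  by (simp add: NL_def QL_def BL_def DL_def algebra_simps)

lemma ident_14: "(y::nat\<Rightarrow>nat) 14 + sum_list (map y (NL ! 14)) + 2 * sum_list (map y (QL ! 14)) = sum_list (map (\<lambda>j. sum_list (map y (BL ! j))) (DL ! 14))"
  by (simp add: NL_def QL_def BL_def DL_def algebra_simps)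

lemma ident_15: "(y::nat\<Rightarrow>nat) 15 + sum_list (map y (NL ! 15)) + 2 * sum_list (map y (QL ! 15)) = sum_list (map (\<lambda>j. sum_list (map y (BL ! j))) (DL ! 15))"
  by (simp add: NL_def QL_def BL_def DL_def algebra_simps)
lemma chk: "\<forall>a\<in>set [0..<16]. (\<forall>b\<in>set (NL!a). a \<in> set (NL!b) \<and> b < 16 \<and> (\<forall>c\<in>set (NL!b). c \<notin> set (NL!a))) \<and> a \<notin> set (NL!a) \<and> (\<forall>j\<in>set (DL!a). j < 6)"
  by code_simp

lemma chk':
  assumes "a < 16"
  shows "\<forall>b\<in>set (NL!a). a \<in> set (NL!b) \<and> b < 16 \<and> (\<forall>c\<in>set (NL!b). c \<notin> set (NL!a))"
    "a \<notin> set (NL!a)" "\<forall>j\<in>set (DL!a). j < 6"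
proof -
  have "a \<in> set [0..<16]" using assms by simp
  note h = bspec[OF chk this]
  show "\<forall>b\<in>set (NL!a). a \<in> set (NL!b) \<and> b < 16 \<and> (\<forall>c\<in>set (NL!b). c \<notin> set (NL!a))"
    using h by (rule conjunct1)
  show "a \<notin> set (NL!a)" using h by (metis conjunct1 conjunct2)
  show "\<forall>j\<in>set (DL!a). j < 6" using h by (metis conjunct2)
qed

lemma ident_all:
  assumes "l0 < 16"
  shows "(y::nat\<Rightarrow>nat) l0 + sum_list (map y (NL ! l0)) + 2 * sum_list (map y (QL ! l0)) = sum_list (map (\<lambda>j. sum_list (map y (BL ! j))) (DL ! l0))"
proof -
  have "l0 = 0 \<or> l0 = 1 \<or> l0 = 2 \<or> l0 = 3 \<or> l0 = 4 \<or> l0 = 5 \<or> l0 = 6 \<or> l0 = 7 \<or> l0 = 8 \<or>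
        l0 = 9 \<or> l0 = 10 \<or> l0 = 11 \<or> l0 = 12 \<or> l0 = 13 \<or> l0 = 14 \<or> l0 = 15" using assms by arith
  then show ?thesis
    by (elim disjE) (simp_all only: ident_0 ident_1 ident_2 ident_3 ident_4 ident_5 ident_6 ident_7
        ident_8 ident_9 ident_10 ident_11 ident_12 ident_13 ident_14 ident_15)
qed

lemma sum_list_mod_cong:
  "(\<forall>j\<in>set L. (f j::nat) mod 2 = g j mod 2) \<Longrightarrow> sum_list (map f L) mod 2 = sum_list (map g L) mod 2"
  by (induction L) (auto intro: mod_add_cong)

lemma mod2_lemma: "((a::nat) + n + 2*q) mod 2 = (b + n + 2*q') mod 2 \<Longrightarrow> a mod 2 = b mod 2"
  by presburger

lemma decode_local:
  fixes y y' :: "nat \<Rightarrow> nat"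
  assumes l0: "l0 < 16"
    and s: "\<forall>j<6. sum_list (map y (BL!j)) mod 2 = sum_list (map y' (BL!j)) mod 2"
    and nb: "\<forall>m\<in>set (NL!l0). y m = y' m"
    and "y l0 < 2" "y' l0 < 2"
  shows "y l0 = y' l0"
proof -
  have D: "\<forall>j\<in>set (DL!l0). j < 6" using chk'(3)[OF l0] .
  have m: "sum_list (map (\<lambda>j. sum_list (map y (BL ! j))) (DL ! l0)) mod 2
         = sum_list (map (\<lambda>j. sum_list (map y' (BL ! j))) (DL ! l0)) mod 2"
    using D s by (intro sum_list_mod_cong) auto
  have N: "sum_list (map y (NL ! l0)) = sum_list (map y' (NL ! l0))"
    using nb by (metis map_eq_conv)
  have "(y l0 + sum_list (map y (NL ! l0)) + 2 * sum_list (map y (QL ! l0))) mod 2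
      = (y' l0 + sum_list (map y' (NL ! l0)) + 2 * sum_list (map y' (QL ! l0))) mod 2"
    unfolding ident_all[OF l0] by (rule m)
  then have "(y l0 + sum_list (map y' (NL ! l0)) + 2 * sum_list (map y (QL ! l0))) mod 2
      = (y' l0 + sum_list (map y' (NL ! l0)) + 2 * sum_list (map y' (QL ! l0))) mod 2"
    unfolding N .
  then have "y l0 mod 2 = y' l0 mod 2" by (rule mod2_lemma)
  then show ?thesis using assms by simp
qed

definition E16 :: "nat \<Rightarrow> nat \<Rightarrow> bool" where
  "E16 v w \<longleftrightarrow> v div 16 = w div 16 \<and> w mod 16 \<in> set (NL ! (v mod 16))"

definition par :: "(nat \<Rightarrow> nat) \<Rightarrow> nat \<Rightarrow> nat" where
  "par x m = sum_list (map (\<lambda>l. x (16 * (m div 6) + l)) (BL ! (m mod 6))) mod 2"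

definition PP :: "nat \<Rightarrow> (nat \<Rightarrow> nat) \<Rightarrow> nat \<Rightarrow> nat" where
  "PP k x = restrict (par x) {..<6*k}"

lemma undirected: "undirected_graph n E16"
  unfolding undirected_graph_def
proof (intro conjI allI impI)
  fix i j assume "i < n" "j < n" "E16 i j"
  then have d: "i div 16 = j div 16" and m: "j mod 16 \<in> set (NL ! (i mod 16))"
    unfolding E16_def by blast+
  have a16: "i mod 16 < 16" by simp
  have "i mod 16 \<in> set (NL ! (j mod 16))" using chk'(1)[OF a16] m by blast
  then show "E16 j i" using d[symmetric] unfolding E16_def by blast
next
  fix i assume "i < n"
  have a16: "i mod 16 < 16" by simp
  show "\<not> E16 i i" using chk'(2)[OF a16] unfolding E16_def by blast
qed

lemma trifree: "triangle_free n E16"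
proof -
  { fix i j k :: nat
    assume ij: "E16 i j" and jk: "E16 j k" and ik: "E16 i k"
    have a: "i mod 16 < 16" by simp
    have b: "j mod 16 \<in> set (NL ! (i mod 16))" using ij unfolding E16_def by blast
    have c1: "k mod 16 \<in> set (NL ! (j mod 16))" using jk unfolding E16_def by blast
    have c2: "k mod 16 \<in> set (NL ! (i mod 16))" using ik unfolding E16_def by blast
    have False using chk'(1)[OF a] b c1 c2 by blast }
  then show ?thesis unfolding triangle_free_def by blast
qed

lemma code_ok:
  assumes x: "x \<in> messages (16*k) 1" and x': "x' \<in> messages (16*k) 1"
    and P: "PP k x = PP k x'"
    and R: "restrict x (nbrs (16*k) E16 i) = restrict x' (nbrs (16*k) E16 i)"
    and i: "i < 16*k"
  shows "x i = x' i"
proof -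
  define c where "c = i div 16"
  define l0 where "l0 = i mod 16"
  have ic: "i = 16*c + l0" and l0: "l0 < 16" and c: "c < k"
    using i by (auto simp: c_def l0_def)
  define y where "y = (\<lambda>l. x (16*c+l))"
  define y' where "y' = (\<lambda>l. x' (16*c+l))"
  have s: "\<forall>j<6. sum_list (map y (BL!j)) mod 2 = sum_list (map y' (BL!j)) mod 2"
  proof (intro allI impI)
    fix j :: nat assume j: "j < 6"
    have lt: "6*c+j < 6*k" using c j by linarith
    have dm: "(6*c+j) div 6 = c" "(6*c+j) mod 6 = j" using j by auto
    have "PP k x (6*c+j) = PP k x' (6*c+j)" using P by simp
    then show "sum_list (map y (BL!j)) mod 2 = sum_list (map y' (BL!j)) mod 2"
      using lt dm by (simp add: PP_def par_def y_def y'_def)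
  qed
  have nb: "\<forall>m\<in>set (NL!l0). y m = y' m"
  proof
    fix m assume m: "m \<in> set (NL!l0)"
    have m16: "m < 16" using chk'(1)[OF l0] m by auto
    have "16*c+m \<in> nbrs (16*k) E16 i"
      unfolding nbrs_def E16_def using m16 c m ic l0 by auto
    then have "restrict x (nbrs (16*k) E16 i) (16*c+m) = restrict x' (nbrs (16*k) E16 i) (16*c+m)"
      using R by simp
    then show "y m = y' m" using \<open>16*c+m \<in> nbrs (16*k) E16 i\<close> by (simp add: y_def y'_def)
  qed
  have "x i < 2" "x' i < 2" using x x' i unfolding messages_def by (auto simp: PiE_def Pi_def)
  then have "y l0 < 2" "y' l0 < 2" using ic by (auto simp: y_def y'_def)
  from decode_local[OF l0 s nb this] show ?thesis using ic by (simp add: y_def y'_def)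
qed



lemma three_elems:
  assumes "2 < card (C::nat set)"
  obtains a b c where "a \<in> C" "b \<in> C" "c \<in> C" "a \<noteq> b" "b \<noteq> c" "a \<noteq> c"
proof -
  have fin: "finite C" using assms card.infinite by fastforce
  have sub: "\<not> C \<subseteq> {a, b}" for a b
  proof
    assume "C \<subseteq> {a, b}"
    then have "card C \<le> card {a, b}" by (intro card_mono) auto
    also have "\<dots> \<le> 2" by (simp add: card_insert_if)
    finally show False using assms by simp
  qed
  obtain a where a: "a \<in> C" using sub[of 0 0] by blast
  obtain b where b: "b \<in> C" "b \<noteq> a" using sub[of a a] by blast
  obtain c where c: "c \<in> C" "c \<noteq> a" "c \<noteq> b" using sub[of a b] by blast
  show ?thesis using that a b c by metis
qed

lemma clique_card:
  assumes tf: "triangle_free n E" and C: "C \<in> cliques n E"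
  shows "card C \<le> 2"
proof (rule ccontr)
  assume "\<not> card C \<le> 2"
  then have "2 < card C" by simp
  then obtain a b c where abc: "a \<in> C" "b \<in> C" "c \<in> C" "a \<noteq> b" "b \<noteq> c" "a \<noteq> c"
    by (rule three_elems)
  have sub: "C \<subseteq> {0..<n}" and cl: "\<forall>u\<in>C. \<forall>v\<in>C. u \<noteq> v \<longrightarrow> E u v"
    using C by (auto simp: cliques_def is_clique_def)
  have "a < n" "b < n" "c < n" using sub abc by auto
  moreover have "E a b" "E b c" "E a c" using cl abc by auto
  ultimately show False using tf unfolding triangle_free_def by blast
qed

lemma frac_ge:
  assumes tf: "triangle_free n E"
  shows "real n / 2 \<le> frac_clique_cover_number n E"
proof -
  let ?Cl = "cliques n E"
  have finCl: "finite ?Cl"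
    by (rule finite_subset[of _ "Pow {0..<n}"]) (auto simp: cliques_def is_clique_def)
  have single: "{v} \<in> ?Cl" if "v < n" for v
    using that by (auto simp: cliques_def is_clique_def)
  have ne: "{w. frac_clique_cover n E w} \<noteq> {}"
  proof -
    have "frac_clique_cover n E (\<lambda>_. 1)"
      unfolding frac_clique_cover_def
    proof (intro conjI ballI allI impI)
      fix v assume v: "v < n"
      have "{v} \<in> {C \<in> ?Cl. v \<in> C}" using single[OF v] by simp
      moreover have "finite {C \<in> ?Cl. v \<in> C}" using finCl by simp
      ultimately have "card {C \<in> ?Cl. v \<in> C} \<ge> 1"
        by (metis One_nat_def Suc_leI card_gt_0_iff empty_iff)
      then show "1 \<le> (\<Sum>C\<in>{C \<in> ?Cl. v \<in> C}. (1::real))" by simp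
    qed simp
    then show ?thesis by blast
  qed
  show ?thesis
    unfolding frac_clique_cover_number_def
  proof (rule cINF_greatest[OF ne])
    fix w assume "w \<in> {w. frac_clique_cover n E w}"
    then have w0: "\<forall>C\<in>?Cl. w C \<ge> 0" and w1: "\<forall>v<n. (\<Sum>C\<in>{C\<in>?Cl. v \<in> C}. w C) \<ge> 1"
      by (auto simp: frac_clique_cover_def)
    have subC: "C \<subseteq> {0..<n}" if "C \<in> ?Cl" for C
      using that by (auto simp: cliques_def is_clique_def)
    have "real n = (\<Sum>v\<in>{0..<n}. (1::real))" by simp
    also have "\<dots> \<le> (\<Sum>v\<in>{0..<n}. \<Sum>C\<in>{C\<in>?Cl. v \<in> C}. w C)"
      using w1 by (intro sum_mono) auto
    also have "\<dots> = (\<Sum>C\<in>?Cl. \<Sum>v\<in>{v\<in>{0..<n}. v \<in> C}. w C)"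
      using sum.swap_restrict[OF finCl, of "{0..<n}" "\<lambda>C v. w C" "\<lambda>C v. v \<in> C"] by simp
    also have "\<dots> = (\<Sum>C\<in>?Cl. real (card C) * w C)"
    proof (rule sum.cong[OF refl])
      fix C assume "C \<in> ?Cl"
      then have "{v\<in>{0..<n}. v \<in> C} = C" using subC[of C] by auto
      then show "(\<Sum>v\<in>{v\<in>{0..<n}. v \<in> C}. w C) = real (card C) * w C" by simp
    qed
    also have "\<dots> \<le> (\<Sum>C\<in>?Cl. 2 * w C)"
    proof (rule sum_mono)
      fix C assume C: "C \<in> ?Cl"
      have "real (card C) \<le> 2" using clique_card[OF tf C] by simp
      then show "real (card C) * w C \<le> 2 * w C" using w0 C by (intro mult_right_mono) auto
    qed
    also have "\<dots> = 2 * (\<Sum>C\<in>?Cl. w C)" by (simp add: sum_distrib_left)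
    finally show "real n / 2 \<le> (\<Sum>C\<in>?Cl. w C)" by simp
  qed
qed

lemma rate_bound:
  fixes PPk :: "(nat \<Rightarrow> nat) \<Rightarrow> nat \<Rightarrow> nat"
  assumes inP: "\<And>x. x \<in> messages n 1 \<Longrightarrow> PPk x \<in> {..<r} \<rightarrow>\<^sub>E {..<2}"
    and dec: "\<And>x x' i. x \<in> messages n 1 \<Longrightarrow> x' \<in> messages n 1 \<Longrightarrow> PPk x = PPk x' \<Longrightarrow>
        restrict x (nbrs n E i) = restrict x' (nbrs n E i) \<Longrightarrow> i < n \<Longrightarrow> x i = x' i"
  shows "broadcast_rate n E \<le> real r"
proof -
  let ?M = "messages n 1"
  let ?S = "PPk ` ?M"
  have SP: "?S \<subseteq> {..<r} \<rightarrow>\<^sub>E {..<2}" using inP by auto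
  have finP: "finite ({..<r} \<rightarrow>\<^sub>E {..<(2::nat)})" by (intro finite_PiE) auto
  have finS: "finite ?S" using finite_subset[OF SP finP] .
  obtain h :: "(nat \<Rightarrow> nat) \<Rightarrow> nat" and m where h: "h ` ?S = {i. i < m}" "inj_on h ?S"
    using finite_imp_inj_to_nat_seg[OF finS] by blast
  define enc where "enc = h \<circ> PPk"
  have sol: "ic_solution n E 1 enc"
    unfolding ic_solution_def
  proof (intro allI impI)
    fix i assume i: "i < n"
    let ?N = "nbrs n E i"
    define dec where "dec = (\<lambda>y s. (SOME x'. x' \<in> ?M \<and> enc x' = y \<and> restrict x' ?N = s) i)"
    have "\<forall>x\<in>?M. dec (enc x) (restrict x ?N) = x i"
    proof
      fix x assume x: "x \<in> ?M"
      let ?x' = "SOME x'. x' \<in> ?M \<and> enc x' = enc x \<and> restrict x' ?N = restrict x ?N"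
      have "\<exists>x'. x' \<in> ?M \<and> enc x' = enc x \<and> restrict x' ?N = restrict x ?N" using x by blast
      then have x': "?x' \<in> ?M" "enc ?x' = enc x" "restrict ?x' ?N = restrict x ?N"
        by (metis (mono_tags, lifting) someI_ex)+
      have "PPk ?x' = PPk x"
        using x'(1,2) x h(2) unfolding enc_def inj_on_def by auto
      then have "?x' i = x i" using dec[OF x'(1) x _ x'(3) i] by simp
      then show "dec (enc x) (restrict x ?N) = x i" by (simp add: dec_def)
    qed
    then show "\<exists>dec. \<forall>x\<in>?M. dec (enc x) (restrict x ?N) = x i" by blast
  qed
  have finM: "finite ?M" unfolding messages_def by (intro finite_PiE) auto
  have "restrict (\<lambda>_. 0) {0..<n} \<in> ?M" unfolding messages_def by auto
  then have Mne: "?M \<noteq> {}" by blast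
  have "enc ` ?M = h ` ?S" by (auto simp: enc_def)
  then have "card (enc ` ?M) \<le> card ?S" using card_image_le[OF finS] by simp
  also have "\<dots> \<le> card ({..<r} \<rightarrow>\<^sub>E {..<(2::nat)})" by (rule card_mono[OF finP SP])
  also have "\<dots> = 2 ^ r" by (simp add: card_PiE)
  finally have c1: "card (enc ` ?M) \<le> 2 ^ r" .
  have c0: "0 < card (enc ` ?M)" using finM Mne by (simp add: card_gt_0_iff)
  have "log 2 (real (card (enc ` ?M))) \<le> real r" by (rule log2_of_power_le[OF c1 c0])
  then have "\<lceil>log 2 (real (card (enc ` ?M)))\<rceil> \<le> int r" by (intro ceiling_le) simp
  then have e: "nat \<lceil>log 2 (real (card (enc ` ?M)))\<rceil> \<le> r" by (simp add: nat_le_iff)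
  have "beta_t n E 1 \<le> r"
    unfolding beta_t_def
    by (rule cINF_lower2[where x=enc]) (use sol e in \<open>auto intro: bdd_belowI2[where m=0]\<close>)
  then have "real (beta_t n E 1) / real (1::nat) \<le> real r" by simp
  then show ?thesis
    unfolding broadcast_rate_def
    by (intro cINF_lower2[where x=1]) (auto intro!: bdd_belowI2[where m=0])
qed


theorem theorem4p1:
  shows "\<forall>N::nat. \<exists>n\<ge>N. \<exists>E :: nat \<Rightarrow> nat \<Rightarrow> bool.
           undirected_graph n E \<and> triangle_free n E \<and>
           frac_clique_cover_number n E \<ge> real n / 2 \<and>
           broadcast_rate n E \<le> 3 / 8 * real n"
proof
  fix N :: nat
  define k where "k = N + 1"
  have br: "broadcast_rate (16*k) E16 \<le> real (6*k)"
  proof (rule rate_bound[where PPk = "PP k"])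
    fix x show "PP k x \<in> {..<6*k} \<rightarrow>\<^sub>E {..<2}"
      unfolding PP_def restrict_PiE_iff par_def by simp
  next
    fix x x' i
    assume "x \<in> messages (16*k) 1" "x' \<in> messages (16*k) 1" "PP k x = PP k x'"
      "restrict x (nbrs (16*k) E16 i) = restrict x' (nbrs (16*k) E16 i)" "i < 16*k"
    then show "x i = x' i" by (rule code_ok)
  qed
  have eq: "3 / 8 * real (16*k) = real (6*k)" by simp
  show "\<exists>n\<ge>N. \<exists>E :: nat \<Rightarrow> nat \<Rightarrow> bool.
           undirected_graph n E \<and> triangle_free n E \<and>
           frac_clique_cover_number n E \<ge> real n / 2 \<and>
           broadcast_rate n E \<le> 3 / 8 * real n"
    using undirected[of "16*k"] trifree[of "16*k"] frac_ge[OF trifree[of "16*k"]] br eq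
    by (intro exI[of _ "16*k"] conjI exI[of _ E16]) (auto simp: k_def)
qed

end
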